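(* Let $G$ be a connected graph with $|V(G)| \ge 3$. Then $\det(G) \le 2\det'(G)$.
   Context: A vertex subset $S$ of $G$ is a vertex determining set if the only automorphism of $G$ fixing every vertex of $S$ is the identity; the determining number $\det(G)$ is the minimum size of a vertex determining set. For a graph $G$ with at most one isolated vertex and no component isomorphic to $K_2$, an edge subset $T$ is an edge determining set if the only automorphism $\phi$ of $G$ satisfying $\{\phi(u),\phi(v)\}=\{u,v\}$ for all $\{u,v\}\in T$ is the identity; the determining index $\det'(G)$ is the minimum size of an edge determining set. *)

theory Defs
  imports Main
begin

definition simple_graph :: "'a set \<Rightarrow> ('a \<Rightarrow> 'a \<Rightarrow> bool) \<Rightarrow> bool" where
  "simple_graph V E \<longleftrightarrow> finite V \<and> (\<forall>u v. E u v \<longrightarrow> u \<in> V \<and> v \<in> V)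
     \<and> (\<forall>u v. E u v \<longrightarrow> E v u) \<and> (\<forall>u. \<not> E u u)"

definition connected_graph :: "'a set \<Rightarrow> ('a \<Rightarrow> 'a \<Rightarrow> bool) \<Rightarrow> bool" where
  "connected_graph V E \<longleftrightarrow> (\<forall>u\<in>V. \<forall>v\<in>V. E\<^sup>*\<^sup>* u v)"

definition edges :: "'a set \<Rightarrow> ('a \<Rightarrow> 'a \<Rightarrow> bool) \<Rightarrow> 'a set set" where
  "edges V E = {{u, v} | u v. u \<in> V \<and> v \<in> V \<and> E u v}"

definition automorphism :: "'a set \<Rightarrow> ('a \<Rightarrow> 'a \<Rightarrow> bool) \<Rightarrow> ('a \<Rightarrow> 'a) \<Rightarrow> bool" where
  "automorphism V E f \<longleftrightarrow> bij_betw f V V \<and> (\<forall>u\<in>V. \<forall>v\<in>V. E (f u) (f v) \<longleftrightarrow> E u v)"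

definition vertex_determining_set :: "'a set \<Rightarrow> ('a \<Rightarrow> 'a \<Rightarrow> bool) \<Rightarrow> 'a set \<Rightarrow> bool" where
  "vertex_determining_set V E S \<longleftrightarrow> S \<subseteq> V \<and>
     (\<forall>f. automorphism V E f \<and> (\<forall>x\<in>S. f x = x) \<longrightarrow> (\<forall>x\<in>V. f x = x))"

definition edge_determining_set :: "'a set \<Rightarrow> ('a \<Rightarrow> 'a \<Rightarrow> bool) \<Rightarrow> 'a set set \<Rightarrow> bool" where
  "edge_determining_set V E T \<longleftrightarrow> T \<subseteq> edges V E \<and>
     (\<forall>f. automorphism V E f \<and> (\<forall>e\<in>T. f ` e = e) \<longrightarrow> (\<forall>x\<in>V. f x = x))"

definition determining_number :: "'a set \<Rightarrow> ('a \<Rightarrow> 'a \<Rightarrow> bool) \<Rightarrow> nat" where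
  "determining_number V E = (LEAST k. \<exists>S. vertex_determining_set V E S \<and> card S = k)"

definition determining_index :: "'a set \<Rightarrow> ('a \<Rightarrow> 'a \<Rightarrow> bool) \<Rightarrow> nat" where
  "determining_index V E = (LEAST k. \<exists>T. edge_determining_set V E T \<and> card T = k)"

end

theory Submission
  imports Defs
begin

lemma path_enter:
  assumes "E\<^sup>*\<^sup>* w z" "z \<in> {u, v}" "w \<notin> {u, v}"
  shows "\<exists>x. x \<notin> {u, v} \<and> (E x u \<or> E x v)"
  using assms
proof (induction rule: rtranclp_induct)
  case base then show ?case by simp
next
  case (step y z)
  show ?case
  proof (cases "y \<in> {u, v}")
    case True then show ?thesis using step by blast
  next
    case False then show ?thesis using step by blast
  qed
qed

lemma all_edges_det:
  assumes sg: "simple_graph V E" and cg: "connected_graph V E" and c3: "card V \<ge> 3"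
  shows "edge_determining_set V E (edges V E)"
  unfolding edge_determining_set_def
proof (intro conjI allI impI ballI)
  fix f v assume H: "automorphism V E f \<and> (\<forall>e\<in>edges V E. f ` e = e)" and vV: "v \<in> V"
  have bij: "bij_betw f V V" using H unfolding automorphism_def by blast
  have fin: "finite V" using sg unfolding simple_graph_def by blast
  have Esym: "\<And>a b. E a b \<Longrightarrow> E b a" and EV: "\<And>a b. E a b \<Longrightarrow> a \<in> V \<and> b \<in> V"
    and Eirr: "\<And>a. \<not> E a a" using sg unfolding simple_graph_def by blast+
  have H2: "\<forall>e\<in>edges V E. f ` e = e" using H by (rule conjunct2)
  have fix_edge: "f ` {a, b} = {a, b}" if Eab: "E a b" for a b
  proof -
    have "a \<in> V" "b \<in> V" using EV[OF Eab] by auto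
    then have "{a, b} \<in> edges V E" using Eab unfolding edges_def by blast
    with H2 show ?thesis by (rule bspec)
  qed
  have "\<exists>w\<in>V. w \<noteq> v"
  proof (rule ccontr)
    assume "\<not> ?thesis" then have "V \<subseteq> {v}" by blast
    then have "card V \<le> 1" using card_mono[of "{v}" V] by simp
    with c3 show False by simp
  qed
  then obtain w where wV: "w \<in> V" and wv: "w \<noteq> v" by blast
  have "E\<^sup>*\<^sup>* v w" using cg vV wV unfolding connected_graph_def by blast
  then obtain u where Evu: "E v u"
    using wv by (cases rule: converse_rtranclpE) auto
  have uV: "u \<in> V" using EV Evu by blast
  have uv: "u \<noteq> v" using Eirr Evu by blast
  have img: "f ` {v, u} = {v, u}" by (rule fix_edge[OF Evu])
  show "f v = v"
  proof (rule ccontr)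
    assume nf: "f v \<noteq> v"
    moreover have "f v \<in> {v, u}" using img by (metis imageI insertCI)
    ultimately have fvu: "f v = u" by simp
    have inj: "inj_on f V" using bij unfolding bij_betw_def by blast
    have "f u \<noteq> u" using inj fvu uv uV vV unfolding inj_on_def by blast
    moreover have "f u \<in> {v, u}" using img by (metis imageI insertCI)
    ultimately have fuv: "f u = v" by simp
    have "\<exists>w\<in>V. w \<notin> {u, v}"
    proof (rule ccontr)
      assume "\<not> ?thesis" then have "V \<subseteq> {u, v}" by blast
      moreover have "card {u, v} \<le> 2" by (simp add: card_insert_if)
      ultimately have "card V \<le> 2" using card_mono[of "{u,v}" V] by simp
      with c3 show False by simp
    qed
    then obtain w' where w'V: "w' \<in> V" and w'n: "w' \<notin> {u, v}" by blast
    have "E\<^sup>*\<^sup>* w' v" using cg vV w'V unfolding connected_graph_def by blast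
    then obtain x where xn: "x \<notin> {u, v}" and Ex: "E x u \<or> E x v"
      using path_enter[of E w' v u v] w'n by blast
    show False
    proof (cases "E x u")
      case True
      then have "f ` {x, u} = {x, u}" by (rule fix_edge)
      then have "f u \<in> {x, u}" by (metis imageI insertCI)
      then show False using fuv xn uv by auto
    next
      case False
      then have "E x v" using Ex by blast
      then have "f ` {x, v} = {x, v}" by (rule fix_edge)
      then have "f v \<in> {x, v}" by (metis imageI insertCI)
      then show False using fvu xn uv by auto
    qed
  qed
qed simp

theorem theorem5:
  fixes V :: "'a set" and E :: "'a \<Rightarrow> 'a \<Rightarrow> bool"
  assumes "simple_graph V E" and "connected_graph V E" and "card V \<ge> 3"
  shows "determining_number V E \<le> 2 * determining_index V E"
proof -
  have ex: "\<exists>T. edge_determining_set V E T \<and> card T = card (edges V E)"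
    using all_edges_det[OF assms] by blast
  have "\<exists>T. edge_determining_set V E T \<and> card T = determining_index V E"
    unfolding determining_index_def by (rule LeastI_ex) (use ex in blast)
  then obtain T where T: "edge_determining_set V E T" and cT: "card T = determining_index V E"
    by blast
  have fin: "finite V" using assms(1) unfolding simple_graph_def by blast
  have Tsub: "T \<subseteq> edges V E" using T unfolding edge_determining_set_def by blast
  have edgesPow: "edges V E \<subseteq> Pow V" unfolding edges_def by blast
  have finT: "finite T" using Tsub edgesPow fin by (meson finite_Pow_iff finite_subset)
  have e2: "\<And>e. e \<in> T \<Longrightarrow> card e \<le> 2"
  proof -
    fix e assume "e \<in> T"
    then obtain a b where "e = {a, b}" using Tsub unfolding edges_def by blast
    then show "card e \<le> 2" by (simp add: card_insert_le_m1)
  qed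
  define S where "S = \<Union>T"
  have SV: "S \<subseteq> V" unfolding S_def using Tsub edgesPow by blast
  have vdS: "vertex_determining_set V E S"
    unfolding vertex_determining_set_def
  proof (intro conjI allI impI)
    show "S \<subseteq> V" by (rule SV)
  next
    fix f assume H: "automorphism V E f \<and> (\<forall>x\<in>S. f x = x)"
    have "\<forall>e\<in>T. f ` e = e"
    proof
      fix e assume "e \<in> T"
      then have "\<forall>x\<in>e. f x = x" using H unfolding S_def by blast
      then show "f ` e = e" by simp
    qed
    then show "\<forall>x\<in>V. f x = x" using T H unfolding edge_determining_set_def by blast
  qed
  have "card S \<le> (\<Sum>e\<in>T. card e)" unfolding S_def by (rule card_Union_le_sum_card)
  also have "\<dots> \<le> (\<Sum>e\<in>T. 2)" by (rule sum_mono) (rule e2)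
  also have "\<dots> = 2 * card T" by simp
  finally have cS: "card S \<le> 2 * card T" .
  have "determining_number V E \<le> card S"
    unfolding determining_number_def by (rule Least_le) (use vdS in blast)
  with cS cT show ?thesis by simp
qed

end
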